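(* The semigroups of tight and loose roles are both functorial with respect to positional reductions. That is, they define functors \[\mathrm{Role}_{\mathrm{tight}} \colon k\mathbf{FHGraph}_\mathsf{PR} \to \mathbf{SGrp}_\mathsf{Q}\] and \[\mathrm{Role}_{\mathrm{loose}} \colon k\mathbf{FHGraph}_\mathsf{PR} \to \mathbf{SGrp}_\mathsf{Q}.\]
   Context: An F-hypergraph is a pair of sets \((A,H)\) with \(H \subseteq A \times \mathcal{P}(A)\); a hyperedge is written \((a,U)\) with source vertex \(a\) and target set \(U \subseteq A\). A \(k\)-relational F-hypergraph is \(\mathcal{H} = (A,(H_i)_{i=1}^k)\) where each \((A,H_i)\) is an F-hypergraph. A map of \(k\)-relational F-hypergraphs \((A,(H_i)_{i=1}^k) \to (A',(H_i')_{i=1}^k)\) is a function \(f\colon A \to A'\) such that for every \(i\) and every \((a,V) \in H_i\) we have \((f(a), f(V)) \in H_i'\). Such a map reflects hyperedges if for every \(i\), every vertex \(a \in A\) and every hyperedge \((f(a),U) \in H_i'\), there exists \(V \subseteq A\) with \((a,V) \in H_i\) and \(f(V) = U\). A positional reduction is a map of \(k\)-relational F-hypergraphs which is surjective on vertices and reflects hyperedges; \(k\mathbf{FHGraph}_\mathsf{PR}\) denotes the category of \(k\)-relational F-hypergraphs and positional reductions. \(\mathbf{SGrp}_\mathsf{Q}\) denotes the category of semigroups and surjective semigroup homomorphisms. For F-hypergraphs \((A,H_1)\), \((A,H_2)\) on the same set, the tight composite is the F-hypergraph on \(A\) with hyperedge set \[\{(a,U) \mid \text{there exist } (a,V) \in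 H_1 \text{ and } b \in V \text{ such that } (b,U) \in H_2\},\] and the loose composite \(H_2 \diamond H_1\) has hyperedge set \[\Big\{(a,W) \;\Big|\; \text{there exists } (a,V) \in H_1 \text{ such that } W = \bigcup_{b \in V} \bigcup_{(b,U) \in H_2} U\Big\}.\] Both operations are associative on the set of F-hypergraph structures on \(A\). For \(\mathcal{H} = (A,(H_i)_{i=1}^k)\), the semigroup of tight roles \(\mathrm{Role}_{\mathrm{tight}}(\mathcal{H})\) is the semigroup generated by \(H_1,\ldots,H_k\) under tight composition, and the semigroup of loose roles \(\mathrm{Role}_{\mathrm{loose}}(\mathcal{H})\) is the semigroup generated by \(H_1,\ldots,H_k\) under loose composition. (In the paper these are written with a black-diamond subscript and a \(\diamond\) subscript, respectively.) *)

theory Defs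
  imports Main
begin

definition fhgraph :: "'a set \<Rightarrow> ('a \<times> 'a set) set \<Rightarrow> bool" where
  "fhgraph A H \<longleftrightarrow> H \<subseteq> A \<times> Pow A"

definition kfhgraph :: "nat \<Rightarrow> 'a set \<Rightarrow> (nat \<Rightarrow> ('a \<times> 'a set) set) \<Rightarrow> bool" where
  "kfhgraph k A Hs \<longleftrightarrow> (\<forall>i\<in>{1..k}. fhgraph A (Hs i))"

definition kfhg_map ::
  "nat \<Rightarrow> 'a set \<Rightarrow> (nat \<Rightarrow> ('a \<times> 'a set) set) \<Rightarrow> 'b set \<Rightarrow> (nat \<Rightarrow> ('b \<times> 'b set) set)
   \<Rightarrow> ('a \<Rightarrow> 'b) \<Rightarrow> bool" where
  "kfhg_map k A Hs A' Hs' f \<longleftrightarrow>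
     kfhgraph k A Hs \<and> kfhgraph k A' Hs' \<and> f ` A \<subseteq> A' \<and>
     (\<forall>i\<in>{1..k}. \<forall>a V. (a, V) \<in> Hs i \<longrightarrow> (f a, f ` V) \<in> Hs' i)"

definition reflects_hyperedges ::
  "nat \<Rightarrow> 'a set \<Rightarrow> (nat \<Rightarrow> ('a \<times> 'a set) set) \<Rightarrow> (nat \<Rightarrow> ('b \<times> 'b set) set)
   \<Rightarrow> ('a \<Rightarrow> 'b) \<Rightarrow> bool" where
  "reflects_hyperedges k A Hs Hs' f \<longleftrightarrow>
     (\<forall>i\<in>{1..k}. \<forall>a\<in>A. \<forall>U. (f a, U) \<in> Hs' i \<longrightarrow> (\<exists>V. (a, V) \<in> Hs i \<and> f ` V = U))"

definition positional_reduction ::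
  "nat \<Rightarrow> 'a set \<Rightarrow> (nat \<Rightarrow> ('a \<times> 'a set) set) \<Rightarrow> 'b set \<Rightarrow> (nat \<Rightarrow> ('b \<times> 'b set) set)
   \<Rightarrow> ('a \<Rightarrow> 'b) \<Rightarrow> bool" where
  "positional_reduction k A Hs A' Hs' f \<longleftrightarrow>
     kfhg_map k A Hs A' Hs' f \<and> f ` A = A' \<and> reflects_hyperedges k A Hs Hs' f"

text \<open>Tight composite: tight_comp H2 H1 (first H1, then H2).\<close>
definition tight_comp :: "('a \<times> 'a set) set \<Rightarrow> ('a \<times> 'a set) set \<Rightarrow> ('a \<times> 'a set) set" where
  "tight_comp H2 H1 = {(a, U). \<exists>V b. (a, V) \<in> H1 \<and> b \<in> V \<and> (b, U) \<in> H2}"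

definition loose_comp :: "('a \<times> 'a set) set \<Rightarrow> ('a \<times> 'a set) set \<Rightarrow> ('a \<times> 'a set) set" where
  "loose_comp H2 H1 = {(a, W). \<exists>V. (a, V) \<in> H1 \<and> W = (\<Union>b\<in>V. \<Union>{U. (b, U) \<in> H2})}"

text \<open>The semigroup generated by H_1..H_k under a composition operation (its carrier;
  the operation is the composition itself).\<close>
inductive_set roles ::
  "(('a \<times> 'a set) set \<Rightarrow> ('a \<times> 'a set) set \<Rightarrow> ('a \<times> 'a set) set)
   \<Rightarrow> nat \<Rightarrow> (nat \<Rightarrow> ('a \<times> 'a set) set) \<Rightarrow> ('a \<times> 'a set) set set"
  for comp k Hs where
  gen: "i \<in> {1..k} \<Longrightarrow> Hs i \<in> roles comp k Hs"
| cmp: "R \<in> roles comp k Hs \<Longrightarrow> S \<in> roles comp k Hs \<Longrightarrow> comp R S \<in> roles comp k Hs"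

abbreviation Role_tight where "Role_tight k Hs \<equiv> roles tight_comp k Hs"
abbreviation Role_loose where "Role_loose k Hs \<equiv> roles loose_comp k Hs"

definition push :: "('a \<Rightarrow> 'b) \<Rightarrow> ('a \<times> 'a set) set \<Rightarrow> ('b \<times> 'b set) set" where
  "push f R = (\<lambda>(a, U). (f a, f ` U)) ` R"

text \<open>phi is a morphism of SGrp_Q from the semigroup (S1, comp1) to (S2, comp2):
  a surjective semigroup homomorphism.\<close>
definition surj_sgrp_hom ::
  "'x set \<Rightarrow> ('x \<Rightarrow> 'x \<Rightarrow> 'x) \<Rightarrow> 'y set \<Rightarrow> ('y \<Rightarrow> 'y \<Rightarrow> 'y) \<Rightarrow> ('x \<Rightarrow> 'y) \<Rightarrow> bool" where
  "surj_sgrp_hom S1 m1 S2 m2 \<phi> \<longleftrightarrow>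
     \<phi> ` S1 = S2 \<and> (\<forall>x\<in>S1. \<forall>y\<in>S1. \<phi> (m1 x y) = m2 (\<phi> x) (\<phi> y))"

end

theory Submission
  imports Defs
begin

definition rfl :: "('a \<Rightarrow> 'b) \<Rightarrow> 'a set \<Rightarrow> ('a \<times> 'a set) set \<Rightarrow> bool" where
  "rfl f A R \<longleftrightarrow> R \<subseteq> A \<times> Pow A \<and>
     (\<forall>a V a'. (a, V) \<in> R \<longrightarrow> a' \<in> A \<longrightarrow> f a' = f a \<longrightarrow> (\<exists>V'. (a', V') \<in> R \<and> f ` V' = f ` V))"

lemma push_mem: "(x, W) \<in> push f R \<longleftrightarrow> (\<exists>a V. (a, V) \<in> R \<and> x = f a \<and> W = f ` V)"
  unfolding push_def by force

lemma rfl_key: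
  assumes "rfl f A R" "b \<in> A"
  shows "{f ` U | U. (b, U) \<in> R} = {W. (f b, W) \<in> push f R}"
proof
  show "{f ` U | U. (b, U) \<in> R} \<subseteq> {W. (f b, W) \<in> push f R}" by (auto simp: push_mem)
  show "{W. (f b, W) \<in> push f R} \<subseteq> {f ` U | U. (b, U) \<in> R}"
  proof
    fix W assume "W \<in> {W. (f b, W) \<in> push f R}"
    then obtain c U where "(c, U) \<in> R" "f b = f c" "W = f ` U" by (auto simp: push_mem)
    with assms obtain U' where "(b, U') \<in> R" "f ` U' = f ` U" unfolding rfl_def by metis
    then show "W \<in> {f ` U | U. (b, U) \<in> R}" using \<open>W = f ` U\<close> by (metis (mono_tags, lifting) mem_Collect_eq)
  qed
qed

lemma img_union: "f ` (\<Union>b\<in>V. \<Union>{U. (b, U) \<in> R}) = (\<Union>b\<in>V. \<Union>{f ` U | U. (b, U) \<in> R})"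
  by blast

lemma loose_img:
  assumes "rfl f A R" "V \<subseteq> A"
  shows "f ` (\<Union>b\<in>V. \<Union>{U. (b, U) \<in> R}) = (\<Union>b'\<in>f ` V. \<Union>{W. (b', W) \<in> push f R})"
proof -
  have "f ` (\<Union>b\<in>V. \<Union>{U. (b, U) \<in> R}) = (\<Union>b\<in>V. \<Union>{W. (f b, W) \<in> push f R})"
    unfolding img_union using rfl_key[OF assms(1)] assms(2) by (metis (no_types, lifting) SUP_cong subsetD)
  also have "\<dots> = (\<Union>b'\<in>f ` V. \<Union>{W. (b', W) \<in> push f R})" by blast
  finally show ?thesis .
qed

lemma tight_ok:
  assumes R: "rfl f A R" and S: "rfl f A S"
  shows "rfl f A (tight_comp R S) \<and> push f (tight_comp R S) = tight_comp (push f R) (push f S)"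
proof (intro conjI)
  show "rfl f A (tight_comp R S)"
    unfolding rfl_def
  proof (intro conjI allI impI)
    show "tight_comp R S \<subseteq> A \<times> Pow A" using R S unfolding rfl_def tight_comp_def by blast
    fix a U a' assume "(a, U) \<in> tight_comp R S" "a' \<in> A" "f a' = f a"
    then obtain V b where "(a, V) \<in> S" "b \<in> V" "(b, U) \<in> R" unfolding tight_comp_def by blast
    with S \<open>a' \<in> A\<close> \<open>f a' = f a\<close> obtain V' where "(a', V') \<in> S" "f ` V' = f ` V"
      unfolding rfl_def by metis
    then obtain b' where "b' \<in> V'" "f b' = f b" using \<open>b \<in> V\<close> by (metis imageE imageI)
    have "b' \<in> A" using S \<open>(a', V') \<in> S\<close> \<open>b' \<in> V'\<close> unfolding rfl_def by blast
    with R \<open>(b, U) \<in> R\<close> \<open>f b' = f b\<close> obtain U' where "(b', U') \<in> R" "f ` U' = f ` U"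
      unfolding rfl_def by metis
    then show "\<exists>U'. (a', U') \<in> tight_comp R S \<and> f ` U' = f ` U"
      using \<open>(a', V') \<in> S\<close> \<open>b' \<in> V'\<close> unfolding tight_comp_def by blast
  qed
  show "push f (tight_comp R S) = tight_comp (push f R) (push f S)"
  proof
    show "push f (tight_comp R S) \<subseteq> tight_comp (push f R) (push f S)"
      unfolding tight_comp_def push_def by force
    show "tight_comp (push f R) (push f S) \<subseteq> push f (tight_comp R S)"
    proof
      fix p assume "p \<in> tight_comp (push f R) (push f S)"
      then obtain x W V' b' where p: "p = (x, W)" "(x, V') \<in> push f S" "b' \<in> V'" "(b', W) \<in> push f R"
        unfolding tight_comp_def by blast
      then obtain a V where aV: "(a, V) \<in> S" "x = f a" "V' = f ` V" by (auto simp: push_mem)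
      then obtain b where "b \<in> V" "b' = f b" using p by blast
      have "b \<in> A" using S aV \<open>b \<in> V\<close> unfolding rfl_def by blast
      have "W \<in> {W. (f b, W) \<in> push f R}" using p \<open>b' = f b\<close> by simp
      then obtain U where "(b, U) \<in> R" "W = f ` U" using rfl_key[OF R \<open>b \<in> A\<close>] by blast
      then have "(a, U) \<in> tight_comp R S" using aV \<open>b \<in> V\<close> unfolding tight_comp_def by blast
      then show "p \<in> push f (tight_comp R S)" using p aV \<open>W = f ` U\<close> by (auto simp: push_mem)
    qed
  qed
qed

lemma loose_ok:
  assumes R: "rfl f A R" and S: "rfl f A S"
  shows "rfl f A (loose_comp R S) \<and> push f (loose_comp R S) = loose_comp (push f R) (push f S)"
proof (intro conjI)
  show "rfl f A (loose_comp R S)"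
    unfolding rfl_def
  proof (intro conjI allI impI)
    show "loose_comp R S \<subseteq> A \<times> Pow A" using R S unfolding rfl_def loose_comp_def by blast
    fix a W a' assume "(a, W) \<in> loose_comp R S" "a' \<in> A" "f a' = f a"
    then obtain V where V: "(a, V) \<in> S" "W = (\<Union>b\<in>V. \<Union>{U. (b, U) \<in> R})" unfolding loose_comp_def by blast
    with S \<open>a' \<in> A\<close> \<open>f a' = f a\<close> obtain V' where V': "(a', V') \<in> S" "f ` V' = f ` V"
      unfolding rfl_def by metis
    have VA: "V \<subseteq> A" "V' \<subseteq> A" using S V V' unfolding rfl_def by blast+
    have "f ` (\<Union>b\<in>V'. \<Union>{U. (b, U) \<in> R}) = f ` W"
      unfolding V(2) loose_img[OF R VA(1)] loose_img[OF R VA(2)] V'(2) ..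
    then show "\<exists>W'. (a', W') \<in> loose_comp R S \<and> f ` W' = f ` W"
      using V' unfolding loose_comp_def by blast
  qed
  show "push f (loose_comp R S) = loose_comp (push f R) (push f S)"
  proof
    show "push f (loose_comp R S) \<subseteq> loose_comp (push f R) (push f S)"
    proof
      fix p assume "p \<in> push f (loose_comp R S)"
      then obtain a V where aV: "(a, V) \<in> S" "p = (f a, f ` (\<Union>b\<in>V. \<Union>{U. (b, U) \<in> R}))"
        unfolding push_def loose_comp_def by (auto simp: push_mem)
      have "V \<subseteq> A" using S aV unfolding rfl_def by blast
      then have "p = (f a, \<Union>b'\<in>f ` V. \<Union>{W. (b', W) \<in> push f R})"
        using aV loose_img[OF R] by simp
      moreover have "(f a, f ` V) \<in> push f S" using aV by (auto simp: push_mem)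
      ultimately show "p \<in> loose_comp (push f R) (push f S)"
        unfolding loose_comp_def by blast
    qed
    show "loose_comp (push f R) (push f S) \<subseteq> push f (loose_comp R S)"
    proof
      fix p assume "p \<in> loose_comp (push f R) (push f S)"
      then obtain x V' where p: "(x, V') \<in> push f S" "p = (x, \<Union>b'\<in>V'. \<Union>{W. (b', W) \<in> push f R})"
        unfolding loose_comp_def by blast
      then obtain a V where aV: "(a, V) \<in> S" "x = f a" "V' = f ` V" by (auto simp: push_mem)
      have "V \<subseteq> A" using S aV unfolding rfl_def by blast
      have "(a, \<Union>b\<in>V. \<Union>{U. (b, U) \<in> R}) \<in> loose_comp R S" using aV unfolding loose_comp_def by blast
      moreover have "p = (f a, f ` (\<Union>b\<in>V. \<Union>{U. (b, U) \<in> R}))"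
        using p(2) aV loose_img[OF R \<open>V \<subseteq> A\<close>] by simp
      ultimately show "p \<in> push f (loose_comp R S)"
        unfolding push_def by force
    qed
  qed
qed

lemma gen_rfl:
  assumes "positional_reduction k A Hs A' Hs' f" "i \<in> {1..k}"
  shows "rfl f A (Hs i) \<and> push f (Hs i) = Hs' i"
proof -
  have sub: "Hs i \<subseteq> A \<times> Pow A" using assms
    unfolding positional_reduction_def kfhg_map_def kfhgraph_def fhgraph_def by simp
  have refl: "\<And>a U. a \<in> A \<Longrightarrow> (f a, U) \<in> Hs' i \<Longrightarrow> \<exists>V. (a, V) \<in> Hs i \<and> f ` V = U"
    using assms unfolding positional_reduction_def reflects_hyperedges_def by blast
  have mp: "\<And>a V. (a, V) \<in> Hs i \<Longrightarrow> (f a, f ` V) \<in> Hs' i"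
    using assms unfolding positional_reduction_def kfhg_map_def by blast
  have sub': "Hs' i \<subseteq> A' \<times> Pow A'" using assms
    unfolding positional_reduction_def kfhg_map_def kfhgraph_def fhgraph_def by simp
  have im: "f ` A = A'" using assms unfolding positional_reduction_def by blast
  have "rfl f A (Hs i)" unfolding rfl_def
  proof (intro conjI allI impI)
    show "Hs i \<subseteq> A \<times> Pow A" by (fact sub)
    fix a V a' assume "(a, V) \<in> Hs i" "a' \<in> A" "f a' = f a"
    then have "(f a', f ` V) \<in> Hs' i" using mp by simp
    then show "\<exists>V'. (a', V') \<in> Hs i \<and> f ` V' = f ` V" using refl \<open>a' \<in> A\<close> by blast
  qed
  moreover have "push f (Hs i) = Hs' i"
  proof
    show "push f (Hs i) \<subseteq> Hs' i" using mp by (auto simp: push_def)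
    show "Hs' i \<subseteq> push f (Hs i)"
    proof
      fix p assume "p \<in> Hs' i"
      then obtain x U where p: "p = (x, U)" "(x, U) \<in> Hs' i" by (cases p) auto
      then have "x \<in> A'" using sub' by blast
      then obtain a where "a \<in> A" "x = f a" using im by blast
      then obtain V where "(a, V) \<in> Hs i" "f ` V = U" using refl p by blast
      then show "p \<in> push f (Hs i)" using p \<open>x = f a\<close> by (auto simp: push_mem)
    qed
  qed
  ultimately show ?thesis by blast
qed

lemma roles_main:
  assumes pr: "positional_reduction k A Hs A' Hs' f"
    and cop_ok: "\<And>R S. rfl f A R \<Longrightarrow> rfl f A S \<Longrightarrow>
          rfl f A (cop R S) \<and> push f (cop R S) = cop' (push f R) (push f S)"
  shows "surj_sgrp_hom (roles cop k Hs) cop (roles cop' k Hs') cop' (push f)"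
proof -
  have r: "R \<in> roles cop k Hs \<Longrightarrow> rfl f A R" for R
    by (induction rule: roles.induct) (use gen_rfl[OF pr] cop_ok in blast)+
  have "push f ` roles cop k Hs \<subseteq> roles cop' k Hs'"
  proof
    fix y assume "y \<in> push f ` roles cop k Hs"
    then obtain R where "R \<in> roles cop k Hs" "y = push f R" by blast
    then show "y \<in> roles cop' k Hs'"
    proof (induction R arbitrary: y rule: roles.induct)
      case (gen i) then show ?case using gen_rfl[OF pr] roles.gen by metis
    next
      case (cmp R S) then show ?case using cop_ok r roles.cmp by metis
    qed
  qed
  moreover have "roles cop' k Hs' \<subseteq> push f ` roles cop k Hs"
  proof
    fix y assume "y \<in> roles cop' k Hs'"
    then show "y \<in> push f ` roles cop k Hs"
    proof (induction rule: roles.induct)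
      case (gen i) then show ?case using gen_rfl[OF pr] roles.gen by (metis imageI)
    next
      case (cmp R' S')
      then obtain R S where "R \<in> roles cop k Hs" "S \<in> roles cop k Hs" "R' = push f R" "S' = push f S"
        by blast
      then show ?case using cop_ok r roles.cmp by (metis imageI)
    qed
  qed
  ultimately show ?thesis unfolding surj_sgrp_hom_def using cop_ok r by blast
qed

lemma pr_comp:
  assumes "positional_reduction k A Hs A' Hs' f" "positional_reduction k A' Hs' A'' Hs'' g"
  shows "positional_reduction k A Hs A'' Hs'' (g \<circ> f)"
proof -
  have "reflects_hyperedges k A Hs Hs'' (g \<circ> f)"
    unfolding reflects_hyperedges_def
  proof (intro ballI allI impI)
    fix i a U assume i: "i \<in> {1..k}" and a: "a \<in> A" and h: "((g \<circ> f) a, U) \<in> Hs'' i"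
    have "f a \<in> A'" using assms(1) a unfolding positional_reduction_def by blast
    have "reflects_hyperedges k A' Hs' Hs'' g" using assms(2) unfolding positional_reduction_def by simp
    then obtain V' where "(f a, V') \<in> Hs' i" "g ` V' = U"
      using \<open>f a \<in> A'\<close> i h unfolding reflects_hyperedges_def by force
    then obtain V where "(a, V) \<in> Hs i" "f ` V = V'"
      using assms(1) i a unfolding positional_reduction_def reflects_hyperedges_def by blast
    then show "\<exists>V. (a, V) \<in> Hs i \<and> (g \<circ> f) ` V = U" using \<open>g ` V' = U\<close> by (auto simp: image_comp)
  qed
  moreover have "kfhg_map k A Hs A'' Hs'' (g \<circ> f)"
  proof -
    have m1: "kfhg_map k A Hs A' Hs' f" "kfhg_map k A' Hs' A'' Hs'' g"
      using assms unfolding positional_reduction_def by simp_all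
    have h: "\<forall>i\<in>{1..k}. \<forall>a V. (a, V) \<in> Hs i \<longrightarrow> ((g \<circ> f) a, (g \<circ> f) ` V) \<in> Hs'' i"
    proof (intro ballI allI impI)
      fix i a V assume i: "i \<in> {1..k}" and "(a, V) \<in> Hs i"
      then have "(f a, f ` V) \<in> Hs' i" using m1(1) unfolding kfhg_map_def by blast
      then have "(g (f a), g ` (f ` V)) \<in> Hs'' i" using m1(2) i unfolding kfhg_map_def by blast
      then show "((g \<circ> f) a, (g \<circ> f) ` V) \<in> Hs'' i" by (simp add: image_comp)
    qed
    show ?thesis using m1 h unfolding kfhg_map_def by (auto simp: image_subset_iff)
  qed
  ultimately show ?thesis using assms unfolding positional_reduction_def by (auto simp: image_comp)
qed

lemma push_comp: "push (g \<circ> f) R = push g (push f R)"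
  unfolding push_def by (auto simp: image_comp image_iff) force+

lemma push_id: "push id R = R"
  unfolding push_def by auto

theorem theorem6p11:
  fixes k :: nat
    and A :: "'a set" and Hs :: "nat \<Rightarrow> ('a \<times> 'a set) set"
    and A' :: "'b set" and Hs' :: "nat \<Rightarrow> ('b \<times> 'b set) set"
    and f :: "'a \<Rightarrow> 'b"
  assumes "positional_reduction k A Hs A' Hs' f"
  shows "surj_sgrp_hom (Role_tight k Hs) tight_comp (Role_tight k Hs') tight_comp (push f)
       \<and> surj_sgrp_hom (Role_loose k Hs) loose_comp (Role_loose k Hs') loose_comp (push f)
       \<and> (\<forall>(A'' :: 'c set) Hs'' (g :: 'b \<Rightarrow> 'c). positional_reduction k A' Hs' A'' Hs'' g \<longrightarrow>
            positional_reduction k A Hs A'' Hs'' (g \<circ> f)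
            \<and> (\<forall>R\<in>Role_tight k Hs. push (g \<circ> f) R = push g (push f R))
            \<and> (\<forall>R\<in>Role_loose k Hs. push (g \<circ> f) R = push g (push f R)))
       \<and> positional_reduction k A Hs A Hs id
       \<and> (\<forall>R\<in>Role_tight k Hs. push id R = R)
       \<and> (\<forall>R\<in>Role_loose k Hs. push id R = R)"
proof -
  have "positional_reduction k A Hs A Hs id"
    using assms unfolding positional_reduction_def kfhg_map_def reflects_hyperedges_def by auto
  moreover have "surj_sgrp_hom (Role_tight k Hs) tight_comp (Role_tight k Hs') tight_comp (push f)"
    by (rule roles_main[OF assms]) (rule tight_ok)
  moreover have "surj_sgrp_hom (Role_loose k Hs) loose_comp (Role_loose k Hs') loose_comp (push f)"
    by (rule roles_main[OF assms]) (rule loose_ok)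
  moreover have "\<forall>(A'' :: 'c set) Hs'' (g :: 'b \<Rightarrow> 'c). positional_reduction k A' Hs' A'' Hs'' g \<longrightarrow>
            positional_reduction k A Hs A'' Hs'' (g \<circ> f)
            \<and> (\<forall>R\<in>Role_tight k Hs. push (g \<circ> f) R = push g (push f R))
            \<and> (\<forall>R\<in>Role_loose k Hs. push (g \<circ> f) R = push g (push f R))"
    using pr_comp[OF assms] push_comp by blast
  ultimately show ?thesis by (simp add: push_id)
qed

end
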